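(* Let $P(z_1,\dots,z_n)=\sum_{S\subseteq[n]}p_S\prod_{i\in S}z_i$ with $p_S\in\mathbb R\setminus\{0\}$ and $p_S=p_{[n]\setminus S}$ for all $S\subseteq[n]$. For each $j$ write $P=A_jz_j+B_j$ with $A_j,B_j$ multilinear in the variables $z_i$, $i\ne j$, and assume that for every $j$, $A_j\ne0$ whenever $|z_i|\ge1$ for all $i\neq j$. Then $P$ has the Lee-Yang property.
   Context: A multilinear polynomial $P(z_1,\dots,z_n)$ has the Lee-Yang property if $P(\lambda_1,\dots,\lambda_n)\neq0$ whenever $|\lambda_i|\ge1$ for all $i$ and $|\lambda_i|>1$ for at least one $i$. *)

theory Defs
  imports Complex_Main
begin

definition mlpoly :: "nat \<Rightarrow> (nat set \<Rightarrow> real) \<Rightarrow> (nat \<Rightarrow> complex) \<Rightarrow> complex" where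
  "mlpoly n p z = (\<Sum>S\<in>Pow {..<n}. complex_of_real (p S) * (\<Prod>i\<in>S. z i))"

definition mlcoeffA :: "nat \<Rightarrow> (nat set \<Rightarrow> real) \<Rightarrow> nat \<Rightarrow> (nat \<Rightarrow> complex) \<Rightarrow> complex" where
  "mlcoeffA n p j z = (\<Sum>S\<in>{S\<in>Pow {..<n}. j \<in> S}. complex_of_real (p S) * (\<Prod>i\<in>S - {j}. z i))"

definition lee_yang :: "nat \<Rightarrow> ((nat \<Rightarrow> complex) \<Rightarrow> complex) \<Rightarrow> bool" where
  "lee_yang n Q \<longleftrightarrow> (\<forall>z. (\<forall>i<n. 1 \<le> norm (z i)) \<and> (\<exists>i<n. 1 < norm (z i)) \<longrightarrow> Q z \<noteq> 0)"

end

theory Submission imports Defs "HOL-Complex_Analysis.Complex_Analysis" begin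

lemma mobius_bound:
  fixes a b c d :: complex
  assumes c0: "c \<noteq> 0"
    and nz: "\<And>w. 1 \<le> norm w \<Longrightarrow> c * w + d \<noteq> 0"
    and circ: "\<And>w. norm w = 1 \<Longrightarrow> norm (a * w + b) \<le> norm (c * w + d)"
    and w: "1 \<le> norm w"
  shows "norm (a * w + b) \<le> norm (c * w + d)"
proof -
  define g where "g u = (a + b * u) / (c + d * u)" for u
  have den: "c + d * u \<noteq> 0" if "norm u \<le> 1" for u
  proof (cases "u = 0")
    case True then show ?thesis using c0 by simp
  next
    case False
    have "norm (inverse u) \<ge> 1" using that False
      by (simp add: norm_inverse one_le_inverse_iff)
    then have "c * inverse u + d \<noteq> 0" by (rule nz)
    moreover have "c + d * u = u * (c * inverse u + d)" using False by (simp add: field_simps)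
    ultimately show ?thesis using False by simp
  qed
  have hol: "g holomorphic_on ball 0 1"
    unfolding g_def by (intro holomorphic_intros) (use den in auto)
  have cont: "continuous_on (cball 0 1) g"
    unfolding g_def by (intro continuous_intros) (use den in auto)
  have fr: "norm (g u) \<le> 1" if "u \<in> sphere 0 1" for u
  proof -
    from that have nu: "norm u = 1" by simp
    then have u0: "u \<noteq> 0" by auto
    have ni: "norm (inverse u) = 1" using nu by (simp add: norm_inverse)
    have e1: "a * inverse u + b = (a + b*u) * inverse u"
      "c * inverse u + d = (c + d*u) * inverse u" using u0 by (simp_all add: field_simps)
    have "g u = ((a + b*u) * inverse u) / ((c + d*u) * inverse u)"
      by (subst mult_divide_mult_cancel_right) (use u0 in \<open>simp_all add: g_def\<close>)
    then have "g u = (a * inverse u + b) / (c * inverse u + d)"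
      by (simp only: e1)
    moreover have "norm (c * inverse u + d) > 0" using nz[of "inverse u"] ni by simp
    ultimately show ?thesis using circ[OF ni]
      by (simp only: norm_divide divide_le_eq_1_pos)
  qed
  have w0: "w \<noteq> 0" using w by auto
  have "norm (inverse w) = inverse (norm w)" by (rule norm_inverse)
  also have "\<dots> \<le> inverse 1" using w by (intro le_imp_inverse_le) auto
  finally have iw: "inverse w \<in> cball 0 1" by simp
  have "norm (g (inverse w)) \<le> 1"
  proof (rule maximum_modulus_frontier[of g "cball 0 1"])
    show "g holomorphic_on interior (cball 0 1)" using hol by simp
    show "continuous_on (closure (cball 0 1)) g" using cont by simp
    show "bounded (cball (0::complex) 1)" by simp
    show "norm (g z) \<le> 1" if "z \<in> frontier (cball 0 1)" for z using fr that by simp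
    show "inverse w \<in> cball 0 1" by (rule iw)
  qed
  moreover have "g (inverse w) = (a * w + b) / (c * w + d)"
  proof -
    have e2: "a * w + b = (a + b * inverse w) * w" "c * w + d = (c + d * inverse w) * w"
      using w0 by (simp_all add: field_simps)
    show ?thesis unfolding e2 g_def
      by (subst mult_divide_mult_cancel_right) (use w0 in simp_all)
  qed
  moreover have "norm (c * w + d) > 0" using nz[OF w] by simp
  ultimately show ?thesis
      by (simp only: norm_divide divide_le_eq_1_pos)
qed


definition ml :: "nat set \<Rightarrow> (nat set \<Rightarrow> real) \<Rightarrow> (nat \<Rightarrow> complex) \<Rightarrow> complex" where
  "ml V c z = (\<Sum>S\<in>Pow V. complex_of_real (c S) * (\<Prod>i\<in>S. z i))"

lemma ml_empty: "ml {} c z = complex_of_real (c {})"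
  by (simp add: ml_def)

lemma ml_upd: "k \<notin> V \<Longrightarrow> ml V c (z(k:=w)) = ml V c z"
  unfolding ml_def by (intro sum.cong refl arg_cong2[where f="(*)"] prod.cong) auto

lemma ml_insert:
  assumes "finite V" "k \<notin> V"
  shows "ml (insert k V) c z = z k * ml V (\<lambda>S. c (insert k S)) z + ml V c z"
proof -
  have disj: "Pow V \<inter> insert k ` Pow V = {}" using assms(2) by auto
  have inj: "inj_on (insert k) (Pow V)"
    unfolding inj_on_def using assms(2) by (metis PowD insert_ident subsetD)
  have "ml (insert k V) c z = (\<Sum>S\<in>Pow V. complex_of_real (c S) * (\<Prod>i\<in>S. z i))
      + (\<Sum>S\<in>insert k ` Pow V. complex_of_real (c S) * (\<Prod>i\<in>S. z i))"
    unfolding ml_def Pow_insert by (rule sum.union_disjoint) (use assms disj in auto)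
  also have "(\<Sum>S\<in>insert k ` Pow V. complex_of_real (c S) * (\<Prod>i\<in>S. z i))
      = (\<Sum>S\<in>Pow V. complex_of_real (c (insert k S)) * (\<Prod>i\<in>insert k S. z i))"
    using sum.reindex[OF inj] by (simp add: comp_def)
  also have "\<dots> = (\<Sum>S\<in>Pow V. z k * (complex_of_real (c (insert k S)) * (\<Prod>i\<in>S. z i)))"
  proof (rule sum.cong[OF refl])
    fix S assume "S \<in> Pow V"
    then have "finite S" "k \<notin> S" using assms finite_subset by auto
    then show "complex_of_real (c (insert k S)) * (\<Prod>i\<in>insert k S. z i)
        = z k * (complex_of_real (c (insert k S)) * (\<Prod>i\<in>S. z i))"
      by (simp add: algebra_simps)
  qed
  also have "\<dots> = z k * ml V (\<lambda>S. c (insert k S)) z"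
    by (simp add: ml_def sum_distrib_left)
  finally show ?thesis unfolding ml_def by (simp add: add.commute)
qed

lemma ml_tendsto:
  assumes "\<And>i. (\<lambda>m. X m i) \<longlonglongrightarrow> z i"
  shows "(\<lambda>m. ml V c (X m)) \<longlonglongrightarrow> ml V c z"
  unfolding ml_def by (intro tendsto_intros assms)

lemma ml_perturb:
  assumes "finite V" "c V \<noteq> 0" "\<forall>i\<in>V. 1 \<le> norm (z i)" "\<epsilon> > 0"
  shows "\<exists>z'. (\<forall>i. i \<notin> V \<longrightarrow> z' i = z i) \<and>
     (\<forall>i\<in>V. norm (z i) \<le> norm (z' i) \<and> norm (z' i - z i) \<le> \<epsilon>) \<and> ml V c z' \<noteq> 0"
  using assms
proof (induction V arbitrary: c rule: finite_induct)
  case empty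
  then show ?case by (intro exI[of _ z]) (simp add: ml_empty)
next
  case (insert m V c)
  define c1 where "c1 = (\<lambda>S. c (insert m S))"
  have "c1 V \<noteq> 0" using insert.prems by (simp add: c1_def)
  from insert.IH[of c1] this insert.prems obtain z1 where
    z1: "\<forall>i. i \<notin> V \<longrightarrow> z1 i = z i" "\<forall>i\<in>V. norm (z i) \<le> norm (z1 i) \<and> norm (z1 i - z i) \<le> \<epsilon>"
      "ml V c1 z1 \<noteq> 0" by auto
  have nm: "1 \<le> norm (z m)" using insert.prems by auto
  then have zm0: "z m \<noteq> 0" by auto
  define s where "s = \<epsilon> / norm (z m)"
  have s0: "s > 0" unfolding s_def using nm insert.prems(3) by (intro divide_pos_pos) auto
  define a where "a = ml V c1 z1"
  define b where "b = ml V c z1"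
  have a0: "a \<noteq> 0" using z1 by (simp add: a_def)
  have "\<exists>t\<in>{s, s/2}. z m * of_real (1 + t) * a + b \<noteq> 0"
  proof (rule ccontr)
    assume "\<not> ?thesis"
    then have "z m * of_real (1 + s) * a + b = 0" "z m * of_real (1 + s/2) * a + b = 0" by auto
    moreover have "z m * of_real (s/2) * a = (z m * of_real (1 + s) * a + b) - (z m * of_real (1 + s/2) * a + b)"
      by (simp add: field_simps)
    ultimately have "z m * of_real (s/2) * a = 0" by simp
    then show False using zm0 a0 s0 by simp
  qed
  then obtain t where t: "t \<in> {s, s/2}" "z m * of_real (1 + t) * a + b \<noteq> 0" by blast
  have t0: "0 \<le> t" "t \<le> s" using t(1) s0 by auto
  define z' where "z' = z1(m := z m * of_real (1 + t))"
  have "ml (insert m V) c z' = z' m * ml V c1 z' + ml V c z'"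
    using ml_insert[OF insert.hyps] by (simp add: c1_def)
  also have "\<dots> = z m * of_real (1 + t) * a + b"
    unfolding z'_def a_def b_def using insert.hyps by (simp add: ml_upd)
  finally have nz: "ml (insert m V) c z' \<noteq> 0" using t by simp
  have n1: "norm (complex_of_real (1 + t)) = 1 + t" using t0 by (subst norm_of_real) simp
  have "norm (z' m) = norm (z m) * (1 + t)" by (simp only: z'_def fun_upd_same norm_mult n1)
  moreover have "0 \<le> norm (z m) * t" using t0 by simp
  ultimately have "norm (z m) \<le> norm (z' m)" by (simp add: algebra_simps)
  moreover have "norm (z' m - z m) \<le> \<epsilon>"
  proof -
    have "z' m - z m = z m * of_real t" by (simp add: z'_def algebra_simps)
    then have "norm (z' m - z m) = norm (z m) * t" using t0 by (simp add: norm_mult)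
    also have "\<dots> \<le> norm (z m) * s" using t0 nm by (intro mult_left_mono) auto
    also have "\<dots> = \<epsilon>" using zm0 by (simp add: s_def)
    finally show ?thesis .
  qed
  ultimately have mm: "norm (z m) \<le> norm (z' m) \<and> norm (z' m - z m) \<le> \<epsilon>" by blast
  show ?case
  proof (intro exI[of _ z'] conjI)
    show "\<forall>i. i \<notin> insert m V \<longrightarrow> z' i = z i" using z1 by (auto simp: z'_def)
    show "\<forall>i\<in>insert m V. norm (z i) \<le> norm (z' i) \<and> norm (z' i - z i) \<le> \<epsilon>"
    proof
      fix i assume "i \<in> insert m V"
      then show "norm (z i) \<le> norm (z' i) \<and> norm (z' i - z i) \<le> \<epsilon>"
        using mm z1(2) insert.hyps by (cases "i = m") (auto simp: z'_def)
    qed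
    show "ml (insert m V) c z' \<noteq> 0" by (rule nz)
  qed
qed


lemma coeffA_ml:
  assumes "j < n"
  shows "mlcoeffA n p j z = ml ({..<n} - {j}) (\<lambda>S. p (insert j S)) z"
proof -
  let ?W = "{..<n} - {j}"
  have eq: "{S\<in>Pow {..<n}. j \<in> S} = insert j ` Pow ?W"
  proof
    show "{S\<in>Pow {..<n}. j \<in> S} \<subseteq> insert j ` Pow ?W"
    proof
      fix S assume "S \<in> {S\<in>Pow {..<n}. j \<in> S}"
      then have "S = insert j (S - {j})" "S - {j} \<in> Pow ?W" by auto
      then show "S \<in> insert j ` Pow ?W" by blast
    qed
    show "insert j ` Pow ?W \<subseteq> {S\<in>Pow {..<n}. j \<in> S}" using assms by auto
  qed
  have inj: "inj_on (insert j) (Pow ?W)"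
    unfolding inj_on_def by (metis PowD insert_ident subsetD Diff_iff singletonI)
  have "mlcoeffA n p j z = (\<Sum>S\<in>Pow ?W. complex_of_real (p (insert j S)) * (\<Prod>i\<in>insert j S - {j}. z i))"
    unfolding mlcoeffA_def eq sum.reindex[OF inj] comp_def by (rule refl)
  also have "\<dots> = ml ?W (\<lambda>S. p (insert j S)) z"
    unfolding ml_def
  proof (rule sum.cong[OF refl])
    fix S assume "S \<in> Pow ?W"
    then have "insert j S - {j} = S" by auto
    then show "complex_of_real (p (insert j S)) * (\<Prod>i\<in>insert j S - {j}. z i)
      = complex_of_real (p (insert j S)) * (\<Prod>i\<in>S. z i)" by simp
  qed
  finally show ?thesis .
qed

lemma torus:
  fixes p :: "nat set \<Rightarrow> real"
  assumes symm: "\<forall>S \<subseteq> {..<n}. p S = p ({..<n} - S)"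
    and j: "j < n" and z: "\<forall>i\<in>{..<n} - {j}. norm (z i) = 1"
  shows "norm (ml ({..<n} - {j}) p z) = norm (ml ({..<n} - {j}) (\<lambda>S. p (insert j S)) z)"
proof -
  define W where "W = {..<n} - {j}"
  have fW: "finite W" by (simp add: W_def)
  have zW: "\<And>i. i \<in> W \<Longrightarrow> norm (z i) = 1" using z by (simp add: W_def)
  have cj: "cnj (z i) = inverse (z i)" if "i \<in> W" for i
  proof -
    have "z i * cnj (z i) = 1" using complex_norm_square[of "z i"] zW[OF that] by simp
    then show ?thesis by (metis inverse_unique)
  qed
  have z0: "z i \<noteq> 0" if "i \<in> W" for i using zW[OF that] by auto
  define PP where "PP = (\<Prod>i\<in>W. z i)"
  have nP: "norm PP = 1" unfolding PP_def prod_norm[symmetric] using zW by simp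
  have "PP * cnj (ml W (\<lambda>S. p (insert j S)) z)
      = (\<Sum>S\<in>Pow W. complex_of_real (p (insert j S)) * (\<Prod>i\<in>W - S. z i))"
    unfolding ml_def cnj_sum sum_distrib_left
  proof (rule sum.cong[OF refl])
    fix S assume S: "S \<in> Pow W"
    then have fS: "finite S" using fW finite_subset by auto
    have "(\<Prod>i\<in>S. cnj (z i)) = (\<Prod>i\<in>S. inverse (z i))"
      using S cj by (intro prod.cong) auto
    moreover have "(\<Prod>i\<in>S. z i) * (\<Prod>i\<in>S. inverse (z i)) = 1"
    proof -
      have "(\<Prod>i\<in>S. z i) * (\<Prod>i\<in>S. inverse (z i)) = (\<Prod>i\<in>S. z i * inverse (z i))"
        by (simp add: prod.distrib)
      also have "\<dots> = (\<Prod>i\<in>S. 1)" using S z0 by (intro prod.cong) auto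
      finally show ?thesis by simp
    qed
    moreover have "PP = (\<Prod>i\<in>W - S. z i) * (\<Prod>i\<in>S. z i)"
      unfolding PP_def using S fW by (intro prod.subset_diff) auto
    ultimately show "PP * cnj (complex_of_real (p (insert j S)) * (\<Prod>i\<in>S. z i))
        = complex_of_real (p (insert j S)) * (\<Prod>i\<in>W - S. z i)"
      by (simp add: algebra_simps)
  qed
  also have "\<dots> = (\<Sum>T\<in>Pow W. complex_of_real (p (insert j (W - T))) * (\<Prod>i\<in>T. z i))"
  proof -
    have dd: "\<And>T. T \<subseteq> W \<Longrightarrow> W - (W - T) = T" by auto
    show ?thesis
      by (rule sum.reindex_bij_witness[where i="\<lambda>T. W - T" and j="\<lambda>S. W - S"]) (auto simp: dd)
  qed
  also have "\<dots> = ml W p z"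
    unfolding ml_def
  proof (rule sum.cong[OF refl])
    fix T assume T: "T \<in> Pow W"
    then have "insert j (W - T) = {..<n} - T" using j by (auto simp: W_def)
    moreover have "T \<subseteq> {..<n}" using T by (auto simp: W_def)
    then have "p T = p ({..<n} - T)" using symm by blast
    ultimately show "complex_of_real (p (insert j (W - T))) * (\<Prod>i\<in>T. z i)
        = complex_of_real (p T) * (\<Prod>i\<in>T. z i)" by simp
  qed
  finally have "ml W p z = PP * cnj (ml W (\<lambda>S. p (insert j S)) z)" ..
  then have "norm (ml W p z) = norm (ml W (\<lambda>S. p (insert j S)) z)"
    using nP by (simp add: norm_mult)
  then show ?thesis by (simp add: W_def)
qed


lemma gamma_nz:
  fixes p :: "nat set \<Rightarrow> real"
  assumes nonzero: "\<forall>S \<subseteq> {..<n}. p S \<noteq> 0"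
    and A_nonzero: "\<forall>j<n. \<forall>z. (\<forall>i<n. i \<noteq> j \<longrightarrow> 1 \<le> norm (z i)) \<longrightarrow> mlcoeffA n p j z \<noteq> 0"
    and j: "j < n" and k: "k < n" "k \<noteq> j"
    and z: "\<forall>i<n. i \<noteq> j \<longrightarrow> i \<noteq> k \<longrightarrow> 1 \<le> norm (z i)"
  shows "ml ({..<n} - {j} - {k}) (\<lambda>S. p (insert j (insert k S))) z \<noteq> 0"
proof
  define V where "V = {..<n} - {j} - {k}"
  define G where "G = ml V (\<lambda>S. p (insert j (insert k S)))"
  define D where "D = ml V (\<lambda>S. p (insert j S))"
  assume "ml ({..<n} - {j} - {k}) (\<lambda>S. p (insert j (insert k S))) z = 0"
  then have Gz: "G z = 0" by (simp add: G_def V_def)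
  have fV: "finite V" by (simp add: V_def)
  have kV: "k \<notin> V" by (simp add: V_def)
  have Wins: "{..<n} - {j} = insert k V" using k by (auto simp: V_def)
  have decomp: "mlcoeffA n p j (y(k:=w)) = w * G y + D y" for y w
  proof -
    have "mlcoeffA n p j (y(k:=w)) = ml (insert k V) (\<lambda>S. p (insert j S)) (y(k:=w))"
      using coeffA_ml[OF j] Wins by simp
    also have "\<dots> = w * G y + D y"
      using ml_insert[OF fV kV] ml_upd[OF kV] by (simp add: G_def D_def)
    finally show ?thesis .
  qed
  have regV: "\<forall>i\<in>V. 1 \<le> norm (z i)" using z by (auto simp: V_def)
  have Dz: "D z \<noteq> 0"
  proof
    assume D0: "D z = 0"
    have "mlcoeffA n p j (z(k:=1)) \<noteq> 0" using A_nonzero j z by auto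
    then show False using decomp[of z 1] Gz D0 by simp
  qed
  have cV: "p (insert j (insert k V)) \<noteq> 0"
  proof -
    have "insert j (insert k V) = {..<n}" using j k by (auto simp: V_def)
    then show ?thesis using nonzero by simp
  qed
  have "\<forall>m. \<exists>z'. (\<forall>i. i \<notin> V \<longrightarrow> z' i = z i) \<and>
     (\<forall>i\<in>V. norm (z i) \<le> norm (z' i) \<and> norm (z' i - z i) \<le> inverse (real (Suc m))) \<and> G z' \<noteq> 0"
  proof
    fix m
    show "\<exists>z'. (\<forall>i. i \<notin> V \<longrightarrow> z' i = z i) \<and>
     (\<forall>i\<in>V. norm (z i) \<le> norm (z' i) \<and> norm (z' i - z i) \<le> inverse (real (Suc m))) \<and> G z' \<noteq> 0"
      unfolding G_def by (rule ml_perturb[OF fV]) (use cV regV in auto)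
  qed
  then have "\<exists>X. \<forall>m. (\<forall>i. i \<notin> V \<longrightarrow> X m i = z i) \<and>
     (\<forall>i\<in>V. norm (z i) \<le> norm (X m i) \<and> norm (X m i - z i) \<le> inverse (real (Suc m))) \<and> G (X m) \<noteq> 0"
    by (rule choice)
  then obtain X where X: "\<And>m. (\<forall>i. i \<notin> V \<longrightarrow> X m i = z i)"
    "\<And>m. (\<forall>i\<in>V. norm (z i) \<le> norm (X m i) \<and> norm (X m i - z i) \<le> inverse (real (Suc m)))"
    "\<And>m. G (X m) \<noteq> 0" by blast
  have conv: "(\<lambda>m. X m i) \<longlonglongrightarrow> z i" for i
  proof (cases "i \<in> V")
    case False
    then have "(\<lambda>m. X m i) = (\<lambda>m. z i)" using X(1) by auto
    then show ?thesis by simp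
  next
    case True
    have "(\<lambda>m. X m i - z i) \<longlonglongrightarrow> 0"
      by (rule Lim_null_comparison[where g="\<lambda>m. inverse (real (Suc m))"])
        (use X(2) True LIMSEQ_inverse_real_of_nat in auto)
    then show ?thesis by (rule LIM_zero_cancel)
  qed
  have "(\<lambda>m. G (X m)) \<longlonglongrightarrow> G z" unfolding G_def by (rule ml_tendsto) (rule conv)
  then have GX: "(\<lambda>m. norm (G (X m))) \<longlonglongrightarrow> 0" using Gz by (simp add: tendsto_norm_zero_iff)
  have "(\<lambda>m. D (X m)) \<longlonglongrightarrow> D z" unfolding D_def by (rule ml_tendsto) (rule conv)
  then have DX: "(\<lambda>m. norm (D (X m))) \<longlonglongrightarrow> norm (D z)" by (rule tendsto_norm)
  define d where "d = norm (D z) / 2"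
  have d0: "0 < d" "d < norm (D z)" using Dz by (auto simp: d_def)
  have ev: "eventually (\<lambda>m. norm (G (X m)) < d \<and> d < norm (D (X m))) sequentially"
    using order_tendstoD(2)[OF GX d0(1)] order_tendstoD(1)[OF DX d0(2)] by (rule eventually_conj)
  then obtain m where m: "norm (G (X m)) < d" "d < norm (D (X m))"
    unfolding eventually_sequentially by auto
  define w where "w = - D (X m) / G (X m)"
  have G0: "G (X m) \<noteq> 0" by (rule X(3))
  have "norm w = norm (D (X m)) / norm (G (X m))" by (simp add: w_def norm_divide)
  moreover have "norm (G (X m)) < norm (D (X m))" using m by simp
  moreover have "0 < norm (G (X m))" using G0 by simp
  ultimately have nw: "1 < norm w" by (simp only: less_divide_eq_1_pos)
  have "mlcoeffA n p j ((X m)(k:=w)) = 0"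
    unfolding decomp using G0 by (simp add: w_def)
  moreover have "\<forall>i<n. i \<noteq> j \<longrightarrow> 1 \<le> norm (((X m)(k:=w)) i)"
  proof (intro allI impI)
    fix i assume "i < n" "i \<noteq> j"
    show "1 \<le> norm (((X m)(k:=w)) i)"
    proof (cases "i = k")
      case True then show ?thesis using nw by simp
    next
      case False
      then have "i \<in> V" using \<open>i < n\<close> \<open>i \<noteq> j\<close> by (simp add: V_def)
      then show ?thesis using X(2)[of m] regV False by force
    qed
  qed
  ultimately show False using A_nonzero j by blast
qed


lemma main_claim:
  fixes p :: "nat set \<Rightarrow> real"
  assumes nonzero: "\<forall>S \<subseteq> {..<n}. p S \<noteq> 0"
    and symm: "\<forall>S \<subseteq> {..<n}. p S = p ({..<n} - S)"
    and A_nonzero: "\<forall>j<n. \<forall>z. (\<forall>i<n. i \<noteq> j \<longrightarrow> 1 \<le> norm (z i)) \<longrightarrow> mlcoeffA n p j z \<noteq> 0"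
    and j: "j < n"
  shows "finite K \<Longrightarrow> K \<subseteq> {..<n} - {j} \<Longrightarrow> \<forall>z. (\<forall>i\<in>{..<n}-{j}. 1 \<le> norm (z i)) \<and>
     (\<forall>i\<in>{..<n}-{j}-K. norm (z i) = 1) \<longrightarrow>
     norm (ml ({..<n}-{j}) p z) \<le> norm (ml ({..<n}-{j}) (\<lambda>S. p (insert j S)) z)"
proof (induction K rule: finite_induct)
  case empty
  show ?case using torus[OF symm j] by auto
next
  case (insert k K)
  define W where "W = {..<n} - {j}"
  define V where "V = W - {k}"
  have kW: "k \<in> W" and KW: "K \<subseteq> {..<n} - {j}" using insert.prems by (auto simp: W_def)
  have fV: "finite V" by (simp add: V_def W_def)
  have kV: "k \<notin> V" by (simp add: V_def)
  have WV: "W = insert k V" using kW by (auto simp: V_def)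
  have kn: "k < n" "k \<noteq> j" using kW by (auto simp: W_def)
  have IH: "\<And>z. (\<forall>i\<in>W. 1 \<le> norm (z i)) \<Longrightarrow> (\<forall>i\<in>W-K. norm (z i) = 1) \<Longrightarrow>
     norm (ml W p z) \<le> norm (ml W (\<lambda>S. p (insert j S)) z)"
    using insert.IH[OF KW] by (auto simp: W_def)
  show ?case
  proof (intro allI impI)
    fix z :: "nat \<Rightarrow> complex" assume hz: "(\<forall>i\<in>{..<n}-{j}. 1 \<le> norm (z i)) \<and> (\<forall>i\<in>{..<n}-{j}-insert k K. norm (z i) = 1)"
    then have hz1: "\<forall>i\<in>W. 1 \<le> norm (z i)" and hz2: "\<forall>i\<in>W - insert k K. norm (z i) = 1"
      by (auto simp: W_def)
    define g where "g = ml V (\<lambda>S. p (insert j (insert k S))) z"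
    define d where "d = ml V (\<lambda>S. p (insert j S)) z"
    define a where "a = ml V (\<lambda>S. p (insert k S)) z"
    define b where "b = ml V p z"
    have dA: "ml W (\<lambda>S. p (insert j S)) (z(k:=w)) = g * w + d" for w
      unfolding WV using ml_insert[OF fV kV] ml_upd[OF kV] by (simp add: g_def d_def mult.commute)
    have dB: "ml W p (z(k:=w)) = a * w + b" for w
      unfolding WV using ml_insert[OF fV kV] ml_upd[OF kV] by (simp add: a_def b_def mult.commute)
    have circ: "norm (a * w + b) \<le> norm (g * w + d)" if w1: "norm w = 1" for w
    proof -
      have "norm (ml W p (z(k:=w))) \<le> norm (ml W (\<lambda>S. p (insert j S)) (z(k:=w)))"
      proof (rule IH)
        show "\<forall>i\<in>W. 1 \<le> norm ((z(k:=w)) i)" using hz1 w1 by auto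
        show "\<forall>i\<in>W-K. norm ((z(k:=w)) i) = 1" using hz2 w1 by auto
      qed
      then show ?thesis unfolding dA dB .
    qed
    have nz: "g * w + d \<noteq> 0" if w1: "1 \<le> norm w" for w
    proof -
      have "\<forall>i<n. i \<noteq> j \<longrightarrow> 1 \<le> norm ((z(k:=w)) i)" using hz1 w1 by (auto simp: W_def)
      then have "mlcoeffA n p j (z(k:=w)) \<noteq> 0" using A_nonzero j by blast
      then show ?thesis using coeffA_ml[OF j] dA by (simp add: W_def)
    qed
    have g0: "g \<noteq> 0"
    proof -
      have "\<forall>i<n. i \<noteq> j \<longrightarrow> i \<noteq> k \<longrightarrow> 1 \<le> norm (z i)" using hz1 by (auto simp: W_def)
      from gamma_nz[OF nonzero A_nonzero j kn this] show ?thesis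
        by (simp add: g_def V_def W_def)
    qed
    have "norm (a * z k + b) \<le> norm (g * z k + d)"
      by (rule mobius_bound[OF g0 nz circ]) (use hz1 kW in auto)
    moreover have "z(k := z k) = z" by simp
    ultimately have "norm (ml W p z) \<le> norm (ml W (\<lambda>S. p (insert j S)) z)"
      using dA[of "z k"] dB[of "z k"] by simp
    then show "norm (ml ({..<n}-{j}) p z) \<le> norm (ml ({..<n}-{j}) (\<lambda>S. p (insert j S)) z)"
      by (simp add: W_def)
  qed
qed

theorem lemma4p7:
  fixes n :: nat and p :: "nat set \<Rightarrow> real"
  assumes nonzero: "\<forall>S \<subseteq> {..<n}. p S \<noteq> 0"
    and symm: "\<forall>S \<subseteq> {..<n}. p S = p ({..<n} - S)"
    and A_nonzero: "\<forall>j<n. \<forall>z. (\<forall>i<n. i \<noteq> j \<longrightarrow> 1 \<le> norm (z i)) \<longrightarrow> mlcoeffA n p j z \<noteq> 0"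
  shows "lee_yang n (mlpoly n p)"
  unfolding lee_yang_def
proof (intro allI impI)
  fix z :: "nat \<Rightarrow> complex"
  assume hz: "(\<forall>i<n. 1 \<le> norm (z i)) \<and> (\<exists>i<n. 1 < norm (z i))"
  then obtain j where j: "j < n" "1 < norm (z j)" by blast
  define W where "W = {..<n} - {j}"
  define A where "A = ml W (\<lambda>S. p (insert j S)) z"
  define B where "B = ml W p z"
  have fW: "finite W" by (simp add: W_def)
  have jW: "j \<notin> W" by (simp add: W_def)
  have nW: "{..<n} = insert j W" using j by (auto simp: W_def)
  have P: "mlpoly n p z = z j * A + B"
    unfolding mlpoly_def A_def B_def using ml_insert[OF fW jW, of p z] nW by (simp add: ml_def)
  have BA: "norm B \<le> norm A"
    using main_claim[OF nonzero symm A_nonzero j(1), of W] hz by (auto simp: W_def A_def B_def)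
  have "mlcoeffA n p j z \<noteq> 0" using A_nonzero hz j by auto
  then have A0: "A \<noteq> 0" using coeffA_ml[OF j(1)] by (simp add: A_def W_def)
  show "mlpoly n p z \<noteq> 0"
  proof
    assume "mlpoly n p z = 0"
    then have "z j * A = - B" using P by (simp add: eq_neg_iff_add_eq_0)
    then have "norm (z j) * norm A = norm B" by (metis norm_minus_cancel norm_mult)
    also have "\<dots> \<le> 1 * norm A" using BA by simp
    finally have "norm (z j) \<le> 1" using A0 by (simp add: mult_le_cancel_right_pos)
    then show False using j by simp
  qed
qed

end
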